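(* $\bigcup_k\mathfrak{L}(\mathrm{rtDBVA}(k))=\mathsf{S}^=_{\mathbb{Q}}$.
   Context: $\mathfrak{L}(A)$ denotes the class of languages recognized by machines of type $A$; the union ranges over $k\ge1$. A real-time deterministic blind vector automaton of dimension $k$ ($\mathrm{rtDBVA}(k)$) is a 6-tuple $(Q,\Sigma,\delta,q_0,Q_a,v)$ with finite state set $Q$, initial state $q_0$, accept states $Q_a$, initial row vector $v\in\mathbb{Q}^k$ (freely chosen), and $\delta:Q\times(\Sigma\cup\{\cent,\$\})\to Q\times S$, $S$ the set of $k\times k$ rational matrices; the input $w$ is read as $\cent w\$$ left to right, one symbol per step, and $\delta(q,\sigma)=(q',M)$ means that in state $q$ reading $\sigma$ the machine goes to $q'$ and multiplies its row vector on the right by $M$. The input is accepted iff after processing $\$$ the state is in $Q_a$ and the first vector entry equals $1$. A Turakainen finite automaton (TuFA) is $\mathcal{G}=(Q,\Sigma,\{A_\sigma\}_{\sigma\in\Sigma},v_0,f)$ where the $A_\sigma$ are $|Q|\times|Q|$ rational matrices, $v_0$ is a rational row vector and $f$ a rational column vector; for $w=w_1\cdots w_n\in\Sigma^*$, $f_{\mathcal{G}}(w)=v_0A_{w_1}\cdots A_{w_n}f$. $\mathsf{S}^=_{\mathbb{Q}}$ is the class of all languages of the form $\{w\in\Sigma^*\mid f_{\mathcal{G}}(w)=\lambda\}$ for some TuFA $\mathcal{G}$ and some $\lambda\in\mathbb{Q}$. *)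

theory Defs
  imports "Jordan_Normal_Form.Matrix"
begin

datatype 'a tsym = Cent | Dollar | Sym 'a

(* States are natural
   numbers (the finite state set Q is explicit); the vector is a 1 x k
   rational row matrix; delta q s = (q', M) means go to q' and multiply the
   row vector on the right by M. *)
record 'a rtdbva =
  st :: "nat set"
  delta :: "nat \<Rightarrow> 'a tsym \<Rightarrow> nat \<times> rat mat"
  init :: nat
  acc :: "nat set"
  vinit :: "rat mat"

definition is_rtDBVA :: "'a set \<Rightarrow> nat \<Rightarrow> 'a rtdbva \<Rightarrow> bool" where
  "is_rtDBVA \<Sigma> k M \<longleftrightarrow>
     finite (st M) \<and> init M \<in> st M \<and> acc M \<subseteq> st M \<and>
     vinit M \<in> carrier_mat 1 k \<and>
     (\<forall>q \<in> st M. \<forall>s \<in> Sym ` \<Sigma> \<union> {Cent, Dollar}.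
        fst (delta M q s) \<in> st M \<and> snd (delta M q s) \<in> carrier_mat k k)"

definition dbva_step :: "'a rtdbva \<Rightarrow> nat \<times> rat mat \<Rightarrow> 'a tsym \<Rightarrow> nat \<times> rat mat" where
  "dbva_step M c s = (case delta M (fst c) s of (q', A) \<Rightarrow> (q', snd c * A))"

definition dbva_run :: "'a rtdbva \<Rightarrow> 'a list \<Rightarrow> nat \<times> rat mat" where
  "dbva_run M w = foldl (dbva_step M) (init M, vinit M) ([Cent] @ map Sym w @ [Dollar])"

definition dbva_lang :: "'a set \<Rightarrow> 'a rtdbva \<Rightarrow> 'a list set" where
  "dbva_lang \<Sigma> M = {w \<in> lists \<Sigma>.
      fst (dbva_run M w) \<in> acc M \<and> snd (dbva_run M w) $$ (0, 0) = 1}"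

definition rtDBVA_langs :: "'a set \<Rightarrow> 'a list set set" where
  "rtDBVA_langs \<Sigma> = {L. \<exists>k\<ge>1. \<exists>M. is_rtDBVA \<Sigma> k M \<and> L = dbva_lang \<Sigma> M}"

(* Turakainen finite automaton with n = |Q| states: v0 is a 1 x n row vector,
   f an n x 1 column vector, A sigma an n x n matrix. *)
record 'a tufa =
  tdim :: nat
  tmat :: "'a \<Rightarrow> rat mat"
  tv0 :: "rat mat"
  tf :: "rat mat"

definition is_TuFA :: "'a set \<Rightarrow> 'a tufa \<Rightarrow> bool" where
  "is_TuFA \<Sigma> G \<longleftrightarrow>
     tv0 G \<in> carrier_mat 1 (tdim G) \<and> tf G \<in> carrier_mat (tdim G) 1 \<and>
     (\<forall>a \<in> \<Sigma>. tmat G a \<in> carrier_mat (tdim G) (tdim G))"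

definition tufa_fun :: "'a tufa \<Rightarrow> 'a list \<Rightarrow> rat" where
  "tufa_fun G w = (foldl (\<lambda>B a. B * tmat G a) (tv0 G) w * tf G) $$ (0, 0)"

definition S_eq_Q :: "'a set \<Rightarrow> 'a list set set" where
  "S_eq_Q \<Sigma> = {L. \<exists>G c. is_TuFA \<Sigma> G \<and> L = {w \<in> lists \<Sigma>. tufa_fun G w = c}}"

end

theory Submission
  imports Defs
begin

lemma mult_entry:
  assumes "A \<in> carrier_mat m n" "B \<in> carrier_mat n p" "i < m" "j < p"
  shows "(A * B) $$ (i,j) = (\<Sum>r<n. A $$ (i,r) * B $$ (r,j))"
  using assms by (auto simp: scalar_prod_def lessThan_atLeast0 intro!: sum.cong)

section \<open>TuFA to rtDBVA\<close>

definition liftv :: "nat \<Rightarrow> rat mat \<Rightarrow> rat mat" where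
  "liftv n x = mat 1 (Suc n) (\<lambda>(_,j). if j = 0 then 1 else x $$ (0, j - 1))"

definition extm :: "nat \<Rightarrow> rat mat \<Rightarrow> rat mat" where
  "extm n A = mat (Suc n) (Suc n) (\<lambda>(i,j). if i = 0 \<and> j = 0 then 1 else if i = 0 \<or> j = 0 then 0 else A $$ (i - 1, j - 1))"

definition dolm :: "nat \<Rightarrow> rat mat \<Rightarrow> rat \<Rightarrow> rat mat" where
  "dolm n f c = mat (Suc n) (Suc n) (\<lambda>(i,j). if j = 0 then (if i = 0 then 1 - c else f $$ (i - 1, 0)) else 0)"

lemma liftv_carrier[simp]: "liftv n x \<in> carrier_mat 1 (Suc n)"
  by (simp add: liftv_def)

lemma liftv_ext:
  assumes x: "x \<in> carrier_mat 1 n" and A: "A \<in> carrier_mat n n"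
  shows "liftv n x * extm n A = liftv n (x * A)"
proof (rule eq_matI)
  show "dim_row (liftv n x * extm n A) = dim_row (liftv n (x * A))"
    by (simp add: liftv_def)
  show "dim_col (liftv n x * extm n A) = dim_col (liftv n (x * A))"
    by (simp add: liftv_def extm_def)
  fix i j assume "i < dim_row (liftv n (x * A))" "j < dim_col (liftv n (x * A))"
  hence ij: "i = 0" "j < Suc n" by (auto simp: liftv_def)
  have "(liftv n x * extm n A) $$ (i,j) = (\<Sum>r<Suc n. liftv n x $$ (0,r) * extm n A $$ (r,j))"
    unfolding ij(1) by (rule mult_entry[where m=1 and n="Suc n" and p="Suc n"]) (auto simp: extm_def liftv_def ij)
  also have "\<dots> = liftv n x $$ (0,0) * extm n A $$ (0,j) + (\<Sum>r<n. liftv n x $$ (0,Suc r) * extm n A $$ (Suc r,j))"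
    by (simp only: sum.lessThan_Suc_shift)
  also have "\<dots> = liftv n (x * A) $$ (i,j)"
  proof (cases j)
    case 0 then show ?thesis using ij by (simp add: liftv_def extm_def)
  next
    case (Suc j')
    have "(x * A) $$ (0, j') = (\<Sum>r<n. x $$ (0,r) * A $$ (r,j'))"
      using x A Suc ij by (intro mult_entry) auto
    then show ?thesis using ij Suc by (simp add: liftv_def extm_def)
  qed
  finally show "(liftv n x * extm n A) $$ (i,j) = liftv n (x * A) $$ (i,j)" .
qed

lemma liftv_dol:
  assumes x: "x \<in> carrier_mat 1 n" and f: "f \<in> carrier_mat n 1"
  shows "(liftv n x * dolm n f c) $$ (0,0) = 1 - c + (x * f) $$ (0,0)"
proof -
  have "(liftv n x * dolm n f c) $$ (0,0) = (\<Sum>r<Suc n. liftv n x $$ (0,r) * dolm n f c $$ (r,0))"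
    by (intro mult_entry[where m=1 and n="Suc n" and p="Suc n"]) (auto simp: dolm_def liftv_def)
  also have "\<dots> = liftv n x $$ (0,0) * dolm n f c $$ (0,0) + (\<Sum>r<n. liftv n x $$ (0,Suc r) * dolm n f c $$ (Suc r,0))"
    by (simp only: sum.lessThan_Suc_shift)
  also have "\<dots> = 1 - c + (\<Sum>r<n. x $$ (0,r) * f $$ (r,0))"
    by (simp add: liftv_def dolm_def)
  also have "(\<Sum>r<n. x $$ (0,r) * f $$ (r,0)) = (x * f) $$ (0,0)"
    using x f by (intro mult_entry[symmetric]) auto
  finally show ?thesis .
qed

definition tu2dbva :: "'a tufa \<Rightarrow> rat \<Rightarrow> 'a rtdbva" where
  "tu2dbva G c = \<lparr>st = {0}, delta = (\<lambda>q s. (0, case s of Cent \<Rightarrow> 1\<^sub>m (Suc (tdim G))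
       | Dollar \<Rightarrow> dolm (tdim G) (tf G) c | Sym a \<Rightarrow> extm (tdim G) (tmat G a))),
     init = 0, acc = {0}, vinit = liftv (tdim G) (tv0 G)\<rparr>"

lemma tufa_fold_carrier:
  assumes "is_TuFA \<Sigma> G" "x \<in> carrier_mat 1 (tdim G)" "w \<in> lists \<Sigma>"
  shows "foldl (\<lambda>B a. B * tmat G a) x w \<in> carrier_mat 1 (tdim G)"
  using assms(2,3)
proof (induction w arbitrary: x)
  case (Cons a w)
  have "x * tmat G a \<in> carrier_mat 1 (tdim G)"
    using Cons.prems assms(1) unfolding is_TuFA_def by (auto intro!: mult_carrier_mat)
  then show ?case using Cons by simp
qed simp

lemma tu2dbva_fold:
  assumes "is_TuFA \<Sigma> G" "x \<in> carrier_mat 1 (tdim G)" "w \<in> lists \<Sigma>"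
  shows "foldl (dbva_step (tu2dbva G c)) (0, liftv (tdim G) x) (map Sym w)
       = (0, liftv (tdim G) (foldl (\<lambda>B a. B * tmat G a) x w))"
  using assms(2,3)
proof (induction w arbitrary: x)
  case (Cons a w)
  have A: "tmat G a \<in> carrier_mat (tdim G) (tdim G)"
    using Cons.prems assms(1) unfolding is_TuFA_def by auto
  have "x * tmat G a \<in> carrier_mat 1 (tdim G)"
    using Cons.prems A by auto
  moreover have "dbva_step (tu2dbva G c) (0, liftv (tdim G) x) (Sym a) = (0, liftv (tdim G) (x * tmat G a))"
    using liftv_ext[OF Cons.prems(1) A] by (simp add: dbva_step_def tu2dbva_def)
  ultimately show ?case using Cons by simp
qed simp

lemma tu2dbva_lang:
  assumes G: "is_TuFA \<Sigma> G"
  shows "dbva_lang \<Sigma> (tu2dbva G c) = {w \<in> lists \<Sigma>. tufa_fun G w = c}"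
proof -
  have "w \<in> dbva_lang \<Sigma> (tu2dbva G c) \<longleftrightarrow> tufa_fun G w = c" if w: "w \<in> lists \<Sigma>" for w
  proof -
    let ?n = "tdim G"
    let ?x = "foldl (\<lambda>B a. B * tmat G a) (tv0 G) w"
    have v0: "tv0 G \<in> carrier_mat 1 ?n" using G by (simp add: is_TuFA_def)
    have f: "tf G \<in> carrier_mat ?n 1" using G by (simp add: is_TuFA_def)
    have xc: "?x \<in> carrier_mat 1 ?n" using tufa_fold_carrier[OF G v0 w] .
    have c1: "dbva_step (tu2dbva G c) (init (tu2dbva G c), vinit (tu2dbva G c)) Cent = (0, liftv ?n (tv0 G))"
      using right_mult_one_mat[OF liftv_carrier[of ?n "tv0 G"]]
      by (simp add: dbva_step_def tu2dbva_def)
    have run: "dbva_run (tu2dbva G c) w = (0, liftv ?n ?x * dolm ?n (tf G) c)"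
      unfolding dbva_run_def using c1 tu2dbva_fold[OF G v0 w, of c]
      by (simp add: dbva_step_def tu2dbva_def)
    show ?thesis
      using w run liftv_dol[OF xc f, of c]
      by (simp add: dbva_lang_def tufa_fun_def tu2dbva_def)
  qed
  then show ?thesis by (auto simp: dbva_lang_def)
qed

lemma tu2dbva_is:
  assumes G: "is_TuFA \<Sigma> G"
  shows "is_rtDBVA \<Sigma> (Suc (tdim G)) (tu2dbva G c)"
  using G unfolding is_rtDBVA_def tu2dbva_def is_TuFA_def
  by (auto simp: extm_def dolm_def liftv_def)

lemma dir1: "S_eq_Q \<Sigma> \<subseteq> rtDBVA_langs \<Sigma>"
proof
  fix L assume "L \<in> S_eq_Q \<Sigma>"
  then obtain G c where G: "is_TuFA \<Sigma> G" and L: "L = {w \<in> lists \<Sigma>. tufa_fun G w = c}"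
    unfolding S_eq_Q_def by auto
  show "L \<in> rtDBVA_langs \<Sigma>"
    unfolding rtDBVA_langs_def
    using tu2dbva_is[OF G, of c] tu2dbva_lang[OF G, of c] L by (intro CollectI exI[of _ "Suc (tdim G)"]) auto
qed

section \<open>rtDBVA to TuFA\<close>

definition emb :: "nat \<Rightarrow> nat \<Rightarrow> nat \<Rightarrow> rat mat \<Rightarrow> rat mat" where
  "emb k N q v = mat 1 (N*k) (\<lambda>(_,r). if r div k = q then v $$ (0, r mod k) else 0)"

definition bigA :: "'a rtdbva \<Rightarrow> nat \<Rightarrow> nat \<Rightarrow> 'a \<Rightarrow> rat mat" where
  "bigA M k N a = mat (N*k) (N*k) (\<lambda>(r,s). if fst (delta M (r div k) (Sym a)) = s div k
      then snd (delta M (r div k) (Sym a)) $$ (r mod k, s mod k) else 0)"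

definition bigf :: "'a rtdbva \<Rightarrow> nat \<Rightarrow> nat \<Rightarrow> rat mat" where
  "bigf M k N = mat (N*k) 1 (\<lambda>(r,_). if fst (delta M (r div k) Dollar) \<in> acc M
      then snd (delta M (r div k) Dollar) $$ (r mod k, 0) else 0)"

lemma block_sum:
  fixes h :: "nat \<Rightarrow> rat"
  assumes "q < N" "0 < k"
  shows "(\<Sum>r<N*k. if r div k = q then h r else 0) = (\<Sum>i<k. h (q*k + i))"
proof -
  have "(\<Sum>r<N*k. if r div k = q then h r else 0) = sum h {r \<in> {..<N*k}. r div k = q}"
    by (rule sum.inter_filter[symmetric]) simp
  also have "{r \<in> {..<N*k}. r div k = q} = (\<lambda>i. q*k + i) ` {..<k}"
  proof (intro Set.set_eqI iffI)
    fix r assume "r \<in> {r \<in> {..<N*k}. r div k = q}"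
    hence "r div k = q" by auto
    hence "r = q*k + r mod k" by (metis div_mult_mod_eq)
    moreover have "r mod k < k" using assms by simp
    ultimately show "r \<in> (\<lambda>i. q*k + i) ` {..<k}" by (metis imageI lessThan_iff)
  next
    fix r assume "r \<in> (\<lambda>i. q*k + i) ` {..<k}"
    then obtain i where i: "i < k" "r = q*k + i" by auto
    have "q*k + k \<le> N*k" using assms by (metis Suc_leI mult_Suc mult_le_mono1 add.commute)
    hence "r < N*k" using i by simp
    moreover have "r div k = q" using i by simp
    ultimately show "r \<in> {r \<in> {..<N*k}. r div k = q}" by simp
  qed
  also have "sum h \<dots> = (\<Sum>i<k. h (q*k + i))"
    by (subst sum.reindex) (auto simp: inj_on_def)
  finally show ?thesis .
qed

lemma emb_carrier[simp]: "emb k N q v \<in> carrier_mat 1 (N*k)"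
  by (simp add: emb_def)

lemma emb_mult_sum:
  assumes "q < N" "0 < k" "B \<in> carrier_mat (N*k) p" "s < p"
  shows "(emb k N q v * B) $$ (0,s) = (\<Sum>i<k. v $$ (0,i) * B $$ (q*k+i, s))"
proof -
  have "(emb k N q v * B) $$ (0,s) = (\<Sum>r<N*k. emb k N q v $$ (0,r) * B $$ (r,s))"
    by (rule mult_entry[OF emb_carrier assms(3)]) (use assms in auto)
  also have "\<dots> = (\<Sum>r<N*k. if r div k = q then v $$ (0, r mod k) * B $$ (r,s) else 0)"
    by (rule sum.cong) (auto simp: emb_def)
  also have "\<dots> = (\<Sum>i<k. v $$ (0,i) * B $$ (q*k+i, s))"
    using block_sum[OF assms(1,2)] assms(2) by simp
  finally show ?thesis .
qed

lemma emb_step: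
  assumes q: "q < N" and k: "0 < k" and v: "v \<in> carrier_mat 1 k"
    and d: "delta M q (Sym a) = (q', A)" and A: "A \<in> carrier_mat k k"
  shows "emb k N q v * bigA M k N a = emb k N q' (v * A)"
proof (rule eq_matI)
  show "dim_row (emb k N q v * bigA M k N a) = dim_row (emb k N q' (v * A))" by (simp add: emb_def)
  show "dim_col (emb k N q v * bigA M k N a) = dim_col (emb k N q' (v * A))" by (simp add: emb_def bigA_def)
  fix i s assume "i < dim_row (emb k N q' (v * A))" "s < dim_col (emb k N q' (v * A))"
  hence ij: "i = 0" "s < N*k" by (auto simp: emb_def)
  have smk: "s mod k < k" using k by simp
  have "(emb k N q v * bigA M k N a) $$ (0,s) = (\<Sum>j<k. v $$ (0,j) * bigA M k N a $$ (q*k+j, s))"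
    by (rule emb_mult_sum[OF q k _ ij(2)]) (simp add: bigA_def)
  also have "\<dots> = (\<Sum>j<k. v $$ (0,j) * (if q' = s div k then A $$ (j, s mod k) else 0))"
  proof (rule sum.cong)
    fix j assume j: "j \<in> {..<k}"
    have "q*k + j < N*k"
    proof -
      have "q*k + k \<le> N*k" using q by (metis Suc_leI mult_Suc mult_le_mono1 add.commute)
      thus ?thesis using j by simp
    qed
    then show "v $$ (0,j) * bigA M k N a $$ (q*k+j, s) = v $$ (0,j) * (if q' = s div k then A $$ (j, s mod k) else 0)"
      using j ij d by (simp add: bigA_def)
  qed simp
  also have "\<dots> = emb k N q' (v * A) $$ (0, s)"
  proof (cases "s div k = q'")
    case True
    have "(v * A) $$ (0, s mod k) = (\<Sum>j<k. v $$ (0,j) * A $$ (j, s mod k))"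
      using v A smk by (intro mult_entry) auto
    then show ?thesis using True ij by (simp add: emb_def)
  next
    case False then show ?thesis using ij by (auto simp: emb_def)
  qed
  finally show "(emb k N q v * bigA M k N a) $$ (i,s) = emb k N q' (v * A) $$ (i,s)" using ij by simp
qed

lemma emb_final:
  assumes q: "q < N" and k: "0 < k" and v: "v \<in> carrier_mat 1 k"
    and d: "delta M q Dollar = (q', A)" and A: "A \<in> carrier_mat k k"
  shows "(emb k N q v * bigf M k N) $$ (0,0) = (if q' \<in> acc M then (v * A) $$ (0,0) else 0)"
proof -
  have "(emb k N q v * bigf M k N) $$ (0,0) = (\<Sum>j<k. v $$ (0,j) * bigf M k N $$ (q*k+j, 0))"
    by (rule emb_mult_sum[OF q k, of _ 1]) (simp_all add: bigf_def)
  also have "\<dots> = (\<Sum>j<k. v $$ (0,j) * (if q' \<in> acc M then A $$ (j, 0) else 0))"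
  proof (rule sum.cong)
    fix j assume j: "j \<in> {..<k}"
    have "q*k + j < N*k"
    proof -
      have "q*k + k \<le> N*k" using q by (metis Suc_leI mult_Suc mult_le_mono1 add.commute)
      thus ?thesis using j by simp
    qed
    then show "v $$ (0,j) * bigf M k N $$ (q*k+j, 0) = v $$ (0,j) * (if q' \<in> acc M then A $$ (j, 0) else 0)"
      using j d by (simp add: bigf_def)
  qed simp
  also have "\<dots> = (if q' \<in> acc M then (v * A) $$ (0,0) else 0)"
  proof (cases "q' \<in> acc M")
    case True
    have "(v * A) $$ (0, 0) = (\<Sum>j<k. v $$ (0,j) * A $$ (j, 0))"
      using v A k by (intro mult_entry[where m=1 and n=k and p=k]) auto
    then show ?thesis using True by simp
  qed simp
  finally show ?thesis .
qed

definition Nm :: "'a rtdbva \<Rightarrow> nat" where "Nm M = Suc (Max (st M))"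

lemma st_less_Nm: "finite (st M) \<Longrightarrow> q \<in> st M \<Longrightarrow> q < Nm M"
  unfolding Nm_def by (simp add: le_imp_less_Suc)

definition dbva2tu :: "'a rtdbva \<Rightarrow> nat \<Rightarrow> 'a tufa" where
  "dbva2tu M k = \<lparr>tdim = Nm M * k, tmat = bigA M k (Nm M),
     tv0 = emb k (Nm M) (fst (dbva_step M (init M, vinit M) Cent)) (snd (dbva_step M (init M, vinit M) Cent)),
     tf = bigf M k (Nm M)\<rparr>"

lemma dbva_step_ok:
  assumes M: "is_rtDBVA \<Sigma> k M" and q: "q \<in> st M" and v: "v \<in> carrier_mat 1 k"
    and s: "s \<in> Sym ` \<Sigma> \<union> {Cent, Dollar}"
  shows "fst (dbva_step M (q,v) s) \<in> st M \<and> snd (dbva_step M (q,v) s) \<in> carrier_mat 1 k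
     \<and> dbva_step M (q,v) s = (fst (delta M q s), v * snd (delta M q s))"
proof -
  have "fst (delta M q s) \<in> st M" "snd (delta M q s) \<in> carrier_mat k k"
    using M q s unfolding is_rtDBVA_def by blast+
  then show ?thesis using v by (auto simp: dbva_step_def split: prod.splits)
qed

lemma dbva2tu_fold:
  assumes M: "is_rtDBVA \<Sigma> k M" and k: "0 < k"
  shows "w \<in> lists \<Sigma> \<Longrightarrow> q \<in> st M \<Longrightarrow> v \<in> carrier_mat 1 k \<Longrightarrow>
    foldl (\<lambda>B a. B * bigA M k (Nm M) a) (emb k (Nm M) q v) w
      = emb k (Nm M) (fst (foldl (dbva_step M) (q,v) (map Sym w))) (snd (foldl (dbva_step M) (q,v) (map Sym w)))
    \<and> fst (foldl (dbva_step M) (q,v) (map Sym w)) \<in> st M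
    \<and> snd (foldl (dbva_step M) (q,v) (map Sym w)) \<in> carrier_mat 1 k"
proof (induction w arbitrary: q v)
  case Nil then show ?case by simp
next
  case (Cons a w)
  have fin: "finite (st M)" using M by (simp add: is_rtDBVA_def)
  have aS: "a \<in> \<Sigma>" using Cons.prems by simp
  have d1: "fst (delta M q (Sym a)) \<in> st M" "snd (delta M q (Sym a)) \<in> carrier_mat k k"
    using M Cons.prems aS unfolding is_rtDBVA_def by blast+
  have st: "dbva_step M (q,v) (Sym a) = (fst (delta M q (Sym a)), v * snd (delta M q (Sym a)))"
    by (simp add: dbva_step_def split: prod.splits)
  have e: "emb k (Nm M) q v * bigA M k (Nm M) a = emb k (Nm M) (fst (delta M q (Sym a))) (v * snd (delta M q (Sym a)))"
    by (rule emb_step[OF st_less_Nm[OF fin Cons.prems(2)] k Cons.prems(3) _ d1(2)]) simp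
  have "v * snd (delta M q (Sym a)) \<in> carrier_mat 1 k" using Cons.prems(3) d1(2) by auto
  then show ?case using Cons.IH[of "fst (delta M q (Sym a))" "v * snd (delta M q (Sym a))"] Cons.prems d1 st e
    by simp
qed

lemma dbva2tu_is:
  assumes M: "is_rtDBVA \<Sigma> k M"
  shows "is_TuFA \<Sigma> (dbva2tu M k)"
  unfolding is_TuFA_def dbva2tu_def by (simp add: bigA_def bigf_def emb_def)

lemma dbva2tu_lang:
  assumes M: "is_rtDBVA \<Sigma> k M" and k: "0 < k"
  shows "dbva_lang \<Sigma> M = {w \<in> lists \<Sigma>. tufa_fun (dbva2tu M k) w = 1}"
proof -
  have fin: "finite (st M)" using M by (simp add: is_rtDBVA_def)
  have "w \<in> dbva_lang \<Sigma> M \<longleftrightarrow> tufa_fun (dbva2tu M k) w = 1" if w: "w \<in> lists \<Sigma>" for w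
  proof -
    define c1 where "c1 = dbva_step M (init M, vinit M) Cent"
    have i: "init M \<in> st M" "vinit M \<in> carrier_mat 1 k" using M by (auto simp: is_rtDBVA_def)
    have c1: "fst c1 \<in> st M" "snd c1 \<in> carrier_mat 1 k"
      using dbva_step_ok[OF M i, of Cent] unfolding c1_def by auto
    define c2 where "c2 = foldl (dbva_step M) c1 (map Sym w)"
    have F: "foldl (\<lambda>B a. B * bigA M k (Nm M) a) (emb k (Nm M) (fst c1) (snd c1)) w
      = emb k (Nm M) (fst c2) (snd c2)" "fst c2 \<in> st M" "snd c2 \<in> carrier_mat 1 k"
      using dbva2tu_fold[OF M k w c1] unfolding c2_def by auto
    have d: "fst (delta M (fst c2) Dollar) \<in> st M" "snd (delta M (fst c2) Dollar) \<in> carrier_mat k k"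
      using M F(2) unfolding is_rtDBVA_def by blast+
    have run: "dbva_run M w = (fst (delta M (fst c2) Dollar), snd c2 * snd (delta M (fst c2) Dollar))"
    proof -
      have "dbva_run M w = dbva_step M c2 Dollar" unfolding dbva_run_def c2_def c1_def by simp
      then show ?thesis by (simp add: dbva_step_def split: prod.splits)
    qed
    have tf: "tufa_fun (dbva2tu M k) w = (if fst (delta M (fst c2) Dollar) \<in> acc M
         then (snd c2 * snd (delta M (fst c2) Dollar)) $$ (0,0) else 0)"
      unfolding tufa_fun_def using F(1)
      by (simp add: dbva2tu_def c1_def[symmetric]
          emb_final[OF st_less_Nm[OF fin F(2)] k F(3) _ d(2)])
    show ?thesis using w run tf by (auto simp: dbva_lang_def)
  qed
  then show ?thesis by (auto simp: dbva_lang_def)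
qed

lemma dir2: "rtDBVA_langs \<Sigma> \<subseteq> S_eq_Q \<Sigma>"
proof
  fix L assume "L \<in> rtDBVA_langs \<Sigma>"
  then obtain k M where k: "k \<ge> 1" and M: "is_rtDBVA \<Sigma> k M" and L: "L = dbva_lang \<Sigma> M"
    unfolding rtDBVA_langs_def by auto
  show "L \<in> S_eq_Q \<Sigma>"
    unfolding S_eq_Q_def using dbva2tu_is[OF M] dbva2tu_lang[OF M] k L
    by (intro CollectI exI[of _ "dbva2tu M k"] exI[of _ 1]) auto
qed

theorem theorem10:
  fixes \<Sigma> :: "'a set"
  assumes "finite \<Sigma>"
  shows "rtDBVA_langs \<Sigma> = S_eq_Q \<Sigma>"
  using dir1 dir2 by blast

end
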